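(* For Lebesgue almost all $x\in(0,1)$, $$\limsup_{n\to\infty}\frac{\log R_n(x)-\log n}{\log\log n}=1\quad\text{and}\quad\limsup_{n\to\infty}\frac{\log M_n(x)-\log n}{\log\log n}=1.$$
   Context: Signed Engel expansion: define $T\colon[0,1)\to[0,1)$ by: for $k\in\mathbb{N}$, $Tx=\lceil 1/x\rceil x-1$ if $x\in(\frac{1}{2k},\frac{1}{2k-1})$; $Tx=1-\lfloor 1/x\rfloor x$ if $x\in(\frac{1}{2k+1},\frac{1}{2k})$; $Tx=0$ if $x\in\{0\}\cup\{1/n\colon n\ge 2\}$. For $x\in(0,1)$, $d_1(x)=\lceil 1/x\rceil$ if $x\in[\frac{1}{2k},\frac{1}{2k-1})$ for some $k\in\mathbb{N}$, and $d_1(x)=\lfloor 1/x\rfloor$ if $x\in[\frac{1}{2k+1},\frac{1}{2k})$ for some $k\in\mathbb{N}$; $d_{n+1}(x)=d_1(T^nx)$. For irrational $x\in(0,1)$, $R_1(x)=d_1(x)$, $R_n(x)=d_n(x)/d_{n-1}(x)$ for $n\ge2$, and $M_n(x)=\max\{R_k(x)\colon 1\le k\le n\}$. *)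

theory Defs
  imports "HOL-Analysis.Analysis"
begin

text \<open>Signed Engel expansion map T on [0,1).\<close>
definition sgnT :: "real \<Rightarrow> real" where
  "sgnT x = (if \<exists>k::nat. k \<ge> 1 \<and> 1 / real (2*k) < x \<and> x < 1 / real (2*k - 1)
               then real_of_int (ceiling (1/x)) * x - 1
             else if \<exists>k::nat. k \<ge> 1 \<and> 1 / real (2*k+1) < x \<and> x < 1 / real (2*k)
               then 1 - real_of_int (floor (1/x)) * x
             else 0)"

definition sgn_d1 :: "real \<Rightarrow> nat" where
  "sgn_d1 x = (if \<exists>k::nat. k \<ge> 1 \<and> 1 / real (2*k) \<le> x \<and> x < 1 / real (2*k - 1)
                then nat (ceiling (1/x))
              else nat (floor (1/x)))"

text \<open>Digits: sgn_d (Suc n) x = d_{n+1}(x) = d_1(T^n x); sgn_d 0 is unused.\<close>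
definition sgn_d :: "nat \<Rightarrow> real \<Rightarrow> nat" where
  "sgn_d n x = sgn_d1 ((sgnT ^^ (n - 1)) x)"

definition sgn_R :: "nat \<Rightarrow> real \<Rightarrow> real" where
  "sgn_R n x = (if n \<le> 1 then real (sgn_d 1 x) else real (sgn_d n x) / real (sgn_d (n - 1) x))"

definition sgn_M :: "nat \<Rightarrow> real \<Rightarrow> real" where
  "sgn_M n x = Max ((\<lambda>k. sgn_R k x) ` {1..n})"

end

theory Submission
  imports Defs
begin

definition pd :: "nat \<Rightarrow> nat" where "pd j = 2 * ((j+1) div 2)"
definition od :: "nat \<Rightarrow> nat" where "od j = (if odd j then j else j+1)"

lemma pd_od: "real (pd j) * real (od j) = real j * (real j + 1)"
  unfolding pd_def od_def by (cases "odd j") (auto elim!: oddE evenE simp: algebra_simps)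

lemma pd_ge: "j \<le> pd j" "pd j \<le> j + 1" unfolding pd_def by presburger+
lemma od_ge: "j \<le> od j" "od j \<le> j + 1" "odd (od j)" unfolding od_def by auto

lemma branch0:
  assumes j: "j \<ge> 1" and x1: "1/real(j+1) < x" and x2: "x < 1/real j"
  shows "sgn_d1 x = pd j \<and> sgnT x = (if odd j then real (pd j) * x - 1 else 1 - real (pd j) * x)"
proof -
  have "0 < 1/real(j+1)" by simp
  then have xpos: "x > 0" using x1 by linarith
  define y where "y = 1/x"
  have y1: "real j < y" using x2 xpos j unfolding y_def by (simp add: field_simps)
  have y2: "y < real j + 1" using x1 xpos j unfolding y_def by (simp add: field_simps)
  have key1: "(1 / real (2*k) < x \<and> x < 1 / real (2*k - 1)) \<longleftrightarrow> (real (2*k) - 1 < y \<and> y < real (2*k))"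
    if "k \<ge> 1" for k :: nat
    using that xpos unfolding y_def by (auto simp: field_simps of_nat_diff)
  have key2: "(1 / real (2*k) \<le> x \<and> x < 1 / real (2*k - 1)) \<longleftrightarrow> (real (2*k) - 1 < y \<and> y \<le> real (2*k))"
    if "k \<ge> 1" for k :: nat
    using that xpos unfolding y_def by (auto simp: field_simps of_nat_diff)
  have key3: "(1 / real (2*k+1) < x \<and> x < 1 / real (2*k)) \<longleftrightarrow> (real (2*k) < y \<and> y < real (2*k) + 1)"
    if "k \<ge> 1" for k :: nat
    using that xpos unfolding y_def by (auto simp: field_simps)
  have xy: "x = 1/y" unfolding y_def using xpos by simp
  show ?thesis
  proof (cases "odd j")
    case True
    define k where "k = (j+1) div 2"
    have k: "j = 2*k - 1" "k \<ge> 1" using True j unfolding k_def by presburger+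
    have pdj: "pd j = 2*k" unfolding pd_def using k by (cases k) auto
    have yk: "real (2*k) - 1 < y" "y < real (2*k)" using y1 y2 k by (auto simp: of_nat_diff)
    have c: "ceiling (1/x) = 2*k" unfolding y_def[symmetric] using yk by (intro ceiling_unique) auto
    have e1: "\<exists>k::nat. k \<ge> 1 \<and> 1 / real (2*k) < x \<and> x < 1 / real (2*k - 1)"
      using key1[OF k(2)] yk k by blast
    have e2: "\<exists>k::nat. k \<ge> 1 \<and> 1 / real (2*k) \<le> x \<and> x < 1 / real (2*k - 1)"
      using key2[OF k(2)] yk k by auto
    show ?thesis using True e1 e2 c pdj unfolding sgnT_def sgn_d1_def by simp
  next
    case False
    define k where "k = j div 2"
    have k: "j = 2*k" "k \<ge> 1" using False j unfolding k_def by presburger+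
    have pdj: "pd j = 2*k" unfolding pd_def using k by simp
    have yk: "real (2*k) < y" "y < real (2*k) + 1" using y1 y2 k by auto
    have f: "floor (1/x) = 2*k" unfolding y_def[symmetric] using yk by (intro floor_unique) auto
    have n1: "\<not>(\<exists>k::nat. k \<ge> 1 \<and> 1 / real (2*k) < x \<and> x < 1 / real (2*k - 1))"
    proof
      assume "\<exists>k'::nat. k' \<ge> 1 \<and> 1 / real (2*k') < x \<and> x < 1 / real (2*k' - 1)"
      then obtain k' where "k' \<ge> 1" "real (2*k') - 1 < y" "y < real (2*k')" using key1 by blast
      then have "k < k'" "k' < k + 1" using yk by linarith+
      then show False by simp
    qed
    have n2: "\<not>(\<exists>k::nat. k \<ge> 1 \<and> 1 / real (2*k) \<le> x \<and> x < 1 / real (2*k - 1))"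
    proof
      assume "\<exists>k'::nat. k' \<ge> 1 \<and> 1 / real (2*k') \<le> x \<and> x < 1 / real (2*k' - 1)"
      then obtain k' where "k' \<ge> 1" "real (2*k') - 1 < y" "y \<le> real (2*k')" using key2 by blast
      then have "k < k'" "k' < k + 1" using yk by linarith+
      then show False by simp
    qed
    have e3: "\<exists>k::nat. k \<ge> 1 \<and> 1 / real (2*k+1) < x \<and> x < 1 / real (2*k)"
      using key3[OF k(2)] yk k by blast
    have t: "sgnT x = 1 - real_of_int (floor(1/x)) * x" unfolding sgnT_def
      by (rule trans[OF if_not_P[OF n1] if_P[OF e3]])
    have d: "sgn_d1 x = nat (floor (1/x))" unfolding sgn_d1_def by (rule if_not_P[OF n2])
    show ?thesis using False t d f pdj by simp
  qed
qed
lemma branch: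
  assumes "j \<ge> 1" "1/real(j+1) < x" "x < 1/real j"
  shows "sgn_d1 x = pd j"
    and "sgnT x = (if odd j then real (pd j) * x - 1 else 1 - real (pd j) * x)"
  using branch0[OF assms] by auto
lemma meas_T[measurable]: "sgnT \<in> borel_measurable borel"
  unfolding sgnT_def by measurable
lemma meas_d1[measurable]: "sgn_d1 \<in> measurable borel (count_space UNIV)"
  unfolding sgn_d1_def by measurable
lemma meas_d1_real[measurable]: "(\<lambda>x. real (sgn_d1 x)) \<in> borel_measurable borel"
  by measurable

lemma affine_preimage:
  fixes c e :: real
  assumes e: "e \<noteq> 0" and B[measurable]: "B \<in> sets borel"
  shows "emeasure lborel ((\<lambda>x. c + e * x) -` B) = ennreal (1/\<bar>e\<bar>) * emeasure lborel B"
proof -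
  have "emeasure (density (distr lborel borel (\<lambda>x. c + e * x)) (\<lambda>_. ennreal \<bar>e\<bar>)) B
      = ennreal \<bar>e\<bar> * emeasure lborel ((\<lambda>x. c + e * x) -` B)"
    by (simp add: emeasure_density emeasure_distr nn_integral_cmult_indicator)
  then have "emeasure lborel B = ennreal \<bar>e\<bar> * emeasure lborel ((\<lambda>x. c + e * x) -` B)"
    using lborel_real_affine[OF e, of c] by simp
  then have "ennreal (1/\<bar>e\<bar>) * emeasure lborel B = (ennreal (1/\<bar>e\<bar>) * ennreal \<bar>e\<bar>) * emeasure lborel ((\<lambda>x. c + e * x) -` B)"
    by (simp add: mult.assoc)
  also have "ennreal (1/\<bar>e\<bar>) * ennreal \<bar>e\<bar> = 1"
    using e by (simp add: ennreal_mult[symmetric])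
  finally show ?thesis by simp
qed
definition aff :: "nat \<Rightarrow> real \<Rightarrow> real" where
  "aff j x = (if odd j then -1 + real (pd j) * x else 1 + (- real (pd j)) * x)"

lemma pd_pos: "j \<ge> 1 \<Longrightarrow> pd j \<ge> 2" unfolding pd_def by presburger

lemma aff_range:
  assumes j: "j \<ge> 1"
  shows "(1/real(j+1) < x \<and> x < 1/real j) \<longleftrightarrow> (0 < aff j x \<and> aff j x < 1/real (od j))"
proof (cases "odd j")
  case True
  then have p: "real (pd j) = real j + 1" "od j = j" unfolding pd_def od_def by (auto elim!: oddE)
  have jp: "real j > 0" using j by simp
  have e: "real j * (-1 + (real j+1)*x) - 1 = (real j + 1) * (real j * x - 1)" by (simp add: algebra_simps)
  have a1: "(-1 + (real j+1)*x < 1/real j) \<longleftrightarrow> real j * (-1 + (real j+1)*x) < 1"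
    using jp by (simp add: field_simps)
  have a2: "real j * (-1 + (real j+1)*x) < 1 \<longleftrightarrow> real j * x < 1"
  proof -
    have "real j * (-1 + (real j+1)*x) < 1 \<longleftrightarrow> (real j + 1) * (real j * x - 1) < 0" using e by linarith
    also have "\<dots> \<longleftrightarrow> real j * x - 1 < 0" using jp by (simp add: mult_less_0_iff)
    finally show ?thesis by simp
  qed
  have a3: "x < 1/real j \<longleftrightarrow> real j * x < 1" using jp by (simp add: field_simps)
  have a4: "1/real(j+1) < x \<longleftrightarrow> 0 < -1 + (real j+1)*x" by (simp add: field_simps)
  show ?thesis using True unfolding aff_def p using a1 a2 a3 a4 by auto
next
  case False
  then have p: "real (pd j) = real j" "od j = j + 1" unfolding pd_def od_def by (auto elim!: evenE)
  have jp: "real j > 0" using j by simp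
  have a1: "(1 - real j * x < 1/(1 + real j)) \<longleftrightarrow> real j < real j * ((real j + 1) * x)"
    using jp by (simp add: field_simps)
  have a2: "real j < real j * ((real j + 1) * x) \<longleftrightarrow> 1 < (real j + 1) * x"
    using jp by simp
  have a3: "x < 1/real j \<longleftrightarrow> 0 < 1 - real j * x" using jp by (simp add: field_simps)
  have a4: "1/(1 + real j) < x \<longleftrightarrow> 1 < (real j + 1) * x" by (simp add: field_simps)
  show ?thesis using False unfolding aff_def p using a1 a2 a3 a4 by auto
qed

lemma floor_branch:
  assumes "0 < x" "x < 1/real m" "m \<ge> 1" "\<forall>j::nat. x \<noteq> 1/real j"
  shows "\<exists>j\<ge>m. 1/real(j+1) < x \<and> x < 1/real j"
proof -
  define y where "y = 1/x"
  have ym: "real m < y" using assms unfolding y_def by (simp add: field_simps)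
  define j where "j = nat (floor y)"
  have j1: "real j \<le> y" "y < real j + 1" unfolding j_def using ym
    by (auto simp: of_nat_nat)
  have "real j \<noteq> y" using assms(4) unfolding y_def using assms(1)
    by (metis divide_divide_eq_right div_by_1 divide_self_if mult.commute times_divide_eq_left)
  then have j2: "real j < y" using j1 by simp
  have jm: "j \<ge> m" using ym j1 by linarith
  have "1/real(j+1) < x \<and> x < 1/real j" using j1 j2 jm assms(1,3) unfolding y_def
    by (auto simp: field_simps)
  then show ?thesis using jm by blast
qed

lemma master:
  assumes m: "m \<ge> 1" and P[measurable]: "\<And>p. {y. P p y} \<in> sets borel"
  shows "emeasure lborel ({0<..<1/real m} \<inter> {x. P (sgn_d1 x) (sgnT x)})
    \<le> (\<Sum>j. if m \<le> j then ennreal (1/real (pd j)) * emeasure lborel ({0<..<1/real (od j)} \<inter> {y. P (pd j) y}) else 0)"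
proof -
  define A where "A j = (if m \<le> j then aff j -` ({0<..<1/real (od j)} \<inter> {y. P (pd j) y}) else {})" for j
  define N where "N = range (\<lambda>j::nat. 1/real j)"
  have affm[measurable]: "aff j \<in> borel_measurable borel" for j unfolding aff_def by measurable
  have pre: "aff j -` B \<in> sets borel" if "B \<in> sets borel" for B j
    using measurable_sets_borel[OF affm that] by simp
  have Am[measurable]: "A j \<in> sets borel" for j
  proof (cases "m \<le> j")
    case True
    have "{0<..<1/real (od j)} \<inter> {y. P (pd j) y} \<in> sets borel" by measurable
    then show ?thesis unfolding A_def using True pre by presburger
  next
    case False then show ?thesis unfolding A_def by simp
  qed
  have Nn: "N \<in> null_sets lborel" unfolding N_def by (intro countable_imp_null_set_lborel) auto
  have sub: "{0<..<1/real m} \<inter> {x. P (sgn_d1 x) (sgnT x)} \<subseteq> (\<Union>j. A j) \<union> N"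
  proof
    fix x assume x: "x \<in> {0<..<1/real m} \<inter> {x. P (sgn_d1 x) (sgnT x)}"
    show "x \<in> (\<Union>j. A j) \<union> N"
    proof (cases "\<forall>j::nat. x \<noteq> 1/real j")
      case False then show ?thesis unfolding N_def by auto
    next
      case True
      then obtain j where j: "j \<ge> m" "1/real(j+1) < x" "x < 1/real j"
        using floor_branch[of x m] x m by auto
      have j1: "j \<ge> 1" using j m by simp
      have br: "sgn_d1 x = pd j" "sgnT x = aff j x"
        using branch[OF j1 j(2,3)] unfolding aff_def by auto
      have "x \<in> A j" unfolding A_def using j aff_range[OF j1, of x] x br by auto
      then show ?thesis by blast
    qed
  qed
  have "emeasure lborel ({0<..<1/real m} \<inter> {x. P (sgn_d1 x) (sgnT x)}) \<le> emeasure lborel ((\<Union>j. A j) \<union> N)"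
    by (intro emeasure_mono sub) (use Nn in auto)
  also have "\<dots> \<le> emeasure lborel (\<Union>j. A j) + emeasure lborel N"
    by (intro emeasure_subadditive) (use Nn in auto)
  also have "emeasure lborel N = 0" using Nn by auto
  also have "emeasure lborel (\<Union>j. A j) \<le> (\<Sum>j. emeasure lborel (A j))"
    by (intro emeasure_subadditive_countably) auto
  also have "(\<lambda>j. emeasure lborel (A j)) = (\<lambda>j. if m \<le> j then ennreal (1/real (pd j)) * emeasure lborel ({0<..<1/real (od j)} \<inter> {y. P (pd j) y}) else 0)"
  proof
    fix j show "emeasure lborel (A j) = (if m \<le> j then ennreal (1/real (pd j)) * emeasure lborel ({0<..<1/real (od j)} \<inter> {y. P (pd j) y}) else 0)"
    proof (cases "m \<le> j")
      case True
      then have j1: "j \<ge> 1" using m by simp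
      have pp: "real (pd j) > 0" using pd_pos[OF j1] by simp
      show ?thesis
      proof (cases "odd j")
        case True
        have "A j = (\<lambda>x. -1 + real (pd j) * x) -` ({0<..<1/real (od j)} \<inter> {y. P (pd j) y})"
          unfolding A_def aff_def using True \<open>m \<le> j\<close> by auto
        then show ?thesis using affine_preimage[of "real (pd j)" "{0<..<1/real (od j)} \<inter> {y. P (pd j) y}" "-1"] pp \<open>m \<le> j\<close>
          by auto
      next
        case False
        have "A j = (\<lambda>x. 1 + (- real (pd j)) * x) -` ({0<..<1/real (od j)} \<inter> {y. P (pd j) y})"
          unfolding A_def aff_def using False \<open>m \<le> j\<close> by auto
        then show ?thesis using affine_preimage[of "- real (pd j)" "{0<..<1/real (od j)} \<inter> {y. P (pd j) y}" "1"] pp \<open>m \<le> j\<close>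
          by auto
      qed
    qed (simp add: A_def)
  qed
  finally show ?thesis by simp
qed
lemma tele:
  assumes "1 \<le> m" "m \<le> N"
  shows "(\<Sum>j=m..<N. 1/(real j*(real j+1))) = 1/real m - 1/real N"
  using assms(2)
proof (induction N rule: dec_induct)
  case base then show ?case by simp
next
  case (step n)
  have n: "real n \<ge> 1" using step assms by simp
  have a: "(\<Sum>j=m..<Suc n. 1/(real j*(real j+1))) = 1/real m - 1/real n + 1/(real n*(real n+1))"
    using step by simp
  have b: "1/(real n*(real n+1)) = 1/real n - 1/(real n+1)" using n by (simp add: field_simps)
  show ?case using a b by simp
qed

lemma sum_bound:
  assumes m: "m \<ge> 1" and c: "c \<ge> 0"
  shows "(\<Sum>j. if m \<le> j then ennreal (c/(real j*(real j+1))) else 0) \<le> ennreal (c/real m)"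
proof -
  have "(\<Sum>j<N. if m \<le> j then ennreal (c/(real j*(real j+1))) else 0) \<le> ennreal (c/real m)" for N
  proof -
    have "(\<Sum>j<N. if m \<le> j then ennreal (c/(real j*(real j+1))) else 0)
        = ennreal (\<Sum>j<N. if m \<le> j then c/(real j*(real j+1)) else 0)"
    proof -
      have "(\<Sum>j<N. if m \<le> j then ennreal (c/(real j*(real j+1))) else 0)
          = (\<Sum>j<N. ennreal (if m \<le> j then c/(real j*(real j+1)) else 0))"
        by (intro sum.cong) auto
      also have "\<dots> = ennreal (\<Sum>j<N. if m \<le> j then c/(real j*(real j+1)) else 0)"
        using c by (intro sum_ennreal) auto
      finally show ?thesis .
    qed
    also have "(\<Sum>j<N. if m \<le> j then c/(real j*(real j+1)) else 0) \<le> c/real m"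
    proof (cases "m \<le> N")
      case True
      have "(\<Sum>j<N. if m \<le> j then c/(real j*(real j+1)) else 0) = (\<Sum>j\<in>{m..<N}. c/(real j*(real j+1)))"
        by (subst sum.inter_filter[symmetric]) (auto intro!: sum.cong)
      also have "\<dots> = c * (\<Sum>j=m..<N. 1/(real j*(real j+1)))" by (simp add: sum_distrib_left)
      also have "\<dots> = c * (1/real m - 1/real N)" using tele[OF m True] by simp
      also have "\<dots> \<le> c/real m" using c by (simp add: algebra_simps)
      finally show ?thesis .
    next
      case False
      then have "(\<Sum>j<N. if m \<le> j then c/(real j*(real j+1)) else 0) = 0" by (intro sum.neutral) auto
      then show ?thesis using c by simp
    qed
    then have "ennreal (\<Sum>j<N. if m \<le> j then c/(real j*(real j+1)) else 0) \<le> ennreal (c/real m)"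
      by (rule ennreal_leI)
    finally show ?thesis .
  qed
  then show ?thesis using ennreal_suminf_bound_add[where y=0] by simp
qed

lemma shift:
  assumes Q[measurable]: "{y. Q y} \<in> sets borel" and c: "c \<ge> 0"
    and H: "\<And>m. m \<ge> 1 \<Longrightarrow> emeasure lborel ({0<..<1/real m} \<inter> {y. Q y}) \<le> ennreal (c/real m)"
    and m: "m \<ge> 1"
  shows "emeasure lborel ({0<..<1/real m} \<inter> {x. Q (sgnT x)}) \<le> ennreal (c/real m)"
proof -
  have "emeasure lborel ({0<..<1/real m} \<inter> {x. (\<lambda>p y. Q y) (sgn_d1 x) (sgnT x)})
    \<le> (\<Sum>j. if m \<le> j then ennreal (1/real (pd j)) * emeasure lborel ({0<..<1/real (od j)} \<inter> {y. (\<lambda>p y. Q y) (pd j) y}) else 0)"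
    by (rule master[OF m]) simp
  also have "\<dots> \<le> (\<Sum>j. if m \<le> j then ennreal (c/(real j*(real j+1))) else 0)"
  proof (intro suminf_le summableI)
    fix j show "(if m \<le> j then ennreal (1/real (pd j)) * emeasure lborel ({0<..<1/real (od j)} \<inter> {y. (\<lambda>p y. Q y) (pd j) y}) else 0)
       \<le> (if m \<le> j then ennreal (c/(real j*(real j+1))) else 0)"
    proof (cases "m \<le> j")
      case True
      then have j1: "j \<ge> 1" using m by simp
      have o1: "od j \<ge> 1" using od_ge(1)[of j] j1 by simp
      have "ennreal (1/real (pd j)) * emeasure lborel ({0<..<1/real (od j)} \<inter> {y. Q y})
          \<le> ennreal (1/real (pd j)) * ennreal (c/real (od j))"
        by (intro mult_left_mono H o1) simp
      also have "\<dots> = ennreal (c/(real j*(real j+1)))"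
        using pd_od[of j] c by (simp add: ennreal_mult[symmetric])
      finally show ?thesis using True by simp
    qed simp
  qed
  also have "\<dots> \<le> ennreal (c/real m)" by (rule sum_bound[OF m c])
  finally show ?thesis by simp
qed

lemma shift_iter:
  assumes Q[measurable]: "{y. Q y} \<in> sets borel" and c: "c \<ge> 0"
    and H: "\<And>m. m \<ge> 1 \<Longrightarrow> emeasure lborel ({0<..<1/real m} \<inter> {y. Q y}) \<le> ennreal (c/real m)"
  shows "m \<ge> 1 \<Longrightarrow> emeasure lborel ({0<..<1/real m} \<inter> {x. Q ((sgnT^^k) x)}) \<le> ennreal (c/real m)"
proof (induction k arbitrary: m)
  case 0 then show ?case using H by simp
next
  case (Suc k)
  have [measurable]: "Measurable.pred borel Q" using Q unfolding pred_def by simp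
  have "{y. Q ((sgnT^^k) y)} \<in> sets borel" by measurable
  from shift[OF this c Suc.IH Suc.prems] show ?case by (simp add: funpow_Suc_right del: funpow.simps)
qed

lemma d1_le: "y > 0 \<Longrightarrow> real (sgn_d1 y) \<le> 1/y + 1"
  unfolding sgn_d1_def by (auto simp: of_nat_nat) linarith+

lemma inner_upper:
  assumes t: "t \<ge> 1" and j: "j \<ge> 1"
  shows "emeasure lborel ({0<..<1/real (od j)} \<inter> {y. t * real (pd j) \<le> real (sgn_d1 y)}) \<le> ennreal ((3/t)/real (od j))"
proof -
  define s where "s = t * real (pd j)"
  have p2: "real (pd j) \<ge> 2" using pd_pos[OF j] by simp
  have s2: "s \<ge> 2" unfolding s_def using t p2 by (metis mult_mono' mult_1 dual_order.trans le_numeral_extra(1) zero_le_numeral mult.commute order.refl)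
  have "{0<..<1/real (od j)} \<inter> {y. s \<le> real (sgn_d1 y)} \<subseteq> {0<..1/(s-1)}"
  proof
    fix y assume y: "y \<in> {0<..<1/real (od j)} \<inter> {y. s \<le> real (sgn_d1 y)}"
    then have "s \<le> 1/y + 1" using d1_le[of y] by auto
    then have "s - 1 \<le> 1/y" by simp
    then have "y \<le> 1/(s-1)" using y s2 by (auto simp: field_simps)
    then show "y \<in> {0<..1/(s-1)}" using y by auto
  qed
  then have "emeasure lborel ({0<..<1/real (od j)} \<inter> {y. s \<le> real (sgn_d1 y)}) \<le> emeasure lborel {0<..1/(s-1)}"
    by (intro emeasure_mono) auto
  also have "\<dots> = ennreal (1/(s-1))" using s2 by simp
  also have "1/(s-1) \<le> (3/t)/real (od j)"
  proof -
    have o: "real (od j) \<le> real (pd j) + 1" using od_ge(2)[of j] pd_ge(1)[of j] by simp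
    have o1: "real (od j) \<ge> 1" using od_ge(1)[of j] j by simp
    have h1: "t * real (od j) \<le> t * (real (pd j) + 1)" using o t by (intro mult_left_mono) auto
    have h2: "t * real (pd j) \<ge> t * 2" using p2 t by (intro mult_left_mono) auto
    have h1': "t * real (od j) \<le> t * real (pd j) + t" using h1 by (simp add: algebra_simps)
    have "3 * (s - 1) = 3 * (t * real (pd j)) - 3" unfolding s_def by simp
    then have "3 * (s - 1) \<ge> t * real (od j)" using h1' h2 t by linarith
    then show ?thesis using o1 t s2 by (simp add: field_simps)
  qed
  finally show ?thesis unfolding s_def by (simp add: ennreal_leI)
qed

lemma upper_one:
  assumes t: "t \<ge> 1" and m: "m \<ge> 1"
  shows "emeasure lborel ({0<..<1/real m} \<inter> {z. t * real (sgn_d1 z) \<le> real (sgn_d1 (sgnT z))}) \<le> ennreal ((3/t)/real m)"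
proof -
  have "emeasure lborel ({0<..<1/real m} \<inter> {z. (\<lambda>p y. t * real p \<le> real (sgn_d1 y)) (sgn_d1 z) (sgnT z)})
    \<le> (\<Sum>j. if m \<le> j then ennreal (1/real (pd j)) * emeasure lborel ({0<..<1/real (od j)} \<inter> {y. (\<lambda>p y. t * real p \<le> real (sgn_d1 y)) (pd j) y}) else 0)"
    by (rule master[OF m]) measurable
  also have "\<dots> \<le> (\<Sum>j. if m \<le> j then ennreal ((3/t)/(real j*(real j+1))) else 0)"
  proof (intro suminf_le summableI)
    fix j show "(if m \<le> j then ennreal (1/real (pd j)) * emeasure lborel ({0<..<1/real (od j)} \<inter> {y. (\<lambda>p y. t * real p \<le> real (sgn_d1 y)) (pd j) y}) else 0)
       \<le> (if m \<le> j then ennreal ((3/t)/(real j*(real j+1))) else 0)"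
    proof (cases "m \<le> j")
      case True
      then have j1: "j \<ge> 1" using m by simp
      have "ennreal (1/real (pd j)) * emeasure lborel ({0<..<1/real (od j)} \<inter> {y. t * real (pd j) \<le> real (sgn_d1 y)})
          \<le> ennreal (1/real (pd j)) * ennreal ((3/t)/real (od j))"
        by (intro mult_left_mono inner_upper t j1) simp
      also have "\<dots> = ennreal ((3/t)/(real j*(real j+1)))"
        using pd_od[of j] t by (simp add: ennreal_mult[symmetric])
      finally show ?thesis using True by simp
    qed simp
  qed
  also have "\<dots> \<le> ennreal ((3/t)/real m)" by (rule sum_bound[OF m]) (use t in simp)
  finally show ?thesis by simp
qed

lemma upper_R:
  assumes t: "t \<ge> 1"
  shows "emeasure lborel ({0<..<1} \<inter> {x. t * real (sgn_d1 ((sgnT^^k) x)) \<le> real (sgn_d1 ((sgnT^^(Suc k)) x))}) \<le> ennreal (3/t)"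
proof -
  have "emeasure lborel ({0<..<1/real (1::nat)} \<inter> {x. (\<lambda>z. t * real (sgn_d1 z) \<le> real (sgn_d1 (sgnT z))) ((sgnT^^k) x)}) \<le> ennreal ((3/t)/real (1::nat))"
  proof (rule shift_iter[where Q="\<lambda>z. t * real (sgn_d1 z) \<le> real (sgn_d1 (sgnT z))" and c="3/t"])
    show "{y. t * real (sgn_d1 y) \<le> real (sgn_d1 (sgnT y))} \<in> sets borel" by measurable
  qed (use t upper_one[OF t] in auto)
  then show ?thesis by simp
qed

fun Cnd :: "nat \<Rightarrow> (nat \<Rightarrow> real) \<Rightarrow> nat \<Rightarrow> real \<Rightarrow> bool" where
  "Cnd 0 t p y = True"
| "Cnd (Suc L) t p y = (real (sgn_d1 y) < t 0 * real p \<and> Cnd L (\<lambda>i. t (Suc i)) (sgn_d1 y) (sgnT y))"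

lemma Cnd_meas[measurable]: "Measurable.pred borel (Cnd L t p)"
proof (induction L arbitrary: t p)
  case 0 then show ?case by simp
next
  case (Suc L)
  note [measurable] = Suc.IH
  show ?case by simp
qed

lemma claim:
  assumes "\<And>i. t i \<ge> 1" and "j \<ge> 1"
  shows "emeasure lborel ({0<..<1/real (od j)} \<inter> {y. Cnd L t (pd j) y})
     \<le> ennreal ((\<Prod>i<L. (1 - 1/(3*t i))) / real (od j))"
  using assms
proof (induction L arbitrary: t j)
  case 0
  then show ?case by simp
next
  case (Suc L)
  define t' where "t' = (\<lambda>i. t (Suc i))"
  define Pr where "Pr = (\<Prod>i<L. (1 - 1/(3*t' i)))"
  define m where "m = od j"
  define s where "s = t 0 * real (pd j)"
  define N where "N = nat (ceiling s)"
  have t1: "\<And>i. t i \<ge> 1" by fact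
  have fac: "0 \<le> 1 - 1/(3*t i)" "1 - 1/(3*t i) \<le> 1" for i
    using t1[of i] by (auto simp: field_simps)
  have Pr0: "Pr \<ge> 0" unfolding Pr_def t'_def using fac by (intro prod_nonneg) auto
  have m1: "m \<ge> 1" unfolding m_def using od_ge(1)[of j] Suc.prems by simp
  have p2: "real (pd j) \<ge> 2" using pd_pos[OF Suc.prems(2)] by simp
  have eq: "{0<..<1/real (od j)} \<inter> {y. Cnd (Suc L) t (pd j) y}
     = {0<..<1/real m} \<inter> {x. (\<lambda>p y. real p < s \<and> Cnd L t' p y) (sgn_d1 x) (sgnT x)}"
    by (auto simp: m_def s_def t'_def)
  have "emeasure lborel ({0<..<1/real m} \<inter> {x. (\<lambda>p y. real p < s \<and> Cnd L t' p y) (sgn_d1 x) (sgnT x)})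
    \<le> (\<Sum>i. if m \<le> i then ennreal (1/real (pd i)) * emeasure lborel ({0<..<1/real (od i)} \<inter> {y. (\<lambda>p y. real p < s \<and> Cnd L t' p y) (pd i) y}) else 0)"
    by (rule master[OF m1]) measurable
  also have "\<dots> \<le> (\<Sum>i. if i \<in> {m..<N} then ennreal (Pr/(real i*(real i+1))) else 0)"
  proof (intro suminf_le summableI)
    fix i show "(if m \<le> i then ennreal (1/real (pd i)) * emeasure lborel ({0<..<1/real (od i)} \<inter> {y. (\<lambda>p y. real p < s \<and> Cnd L t' p y) (pd i) y}) else 0)
       \<le> (if i \<in> {m..<N} then ennreal (Pr/(real i*(real i+1))) else 0)"
    proof (cases "m \<le> i \<and> real (pd i) < s")
      case True
      then have i1: "i \<ge> 1" using m1 by simp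
      have "real i < s" using True pd_ge(1)[of i] by (meson of_nat_le_iff order.strict_trans1)
      then have iN: "i < N" unfolding N_def by linarith
      have "ennreal (1/real (pd i)) * emeasure lborel ({0<..<1/real (od i)} \<inter> {y. real (pd i) < s \<and> Cnd L t' (pd i) y})
          \<le> ennreal (1/real (pd i)) * emeasure lborel ({0<..<1/real (od i)} \<inter> {y. Cnd L t' (pd i) y})"
        by (intro mult_left_mono emeasure_mono) auto
      also have "\<dots> \<le> ennreal (1/real (pd i)) * ennreal (Pr/real (od i))"
        unfolding Pr_def by (intro mult_left_mono Suc.IH i1) (auto simp: t'_def t1)
      also have "\<dots> = ennreal (Pr/(real i*(real i+1)))"
        using pd_od[of i] Pr0 by (simp add: ennreal_mult[symmetric])
      finally show ?thesis using True iN by simp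
    next
      case False
      then show ?thesis by auto
    qed
  qed
  also have "(\<Sum>i. if i \<in> {m..<N} then ennreal (Pr/(real i*(real i+1))) else 0)
      = (\<Sum>i\<in>{m..<N}. ennreal (Pr/(real i*(real i+1))))"
    by (subst suminf_finite[where N="{m..<N}"]) auto
  also have "\<dots> = ennreal (\<Sum>i\<in>{m..<N}. Pr/(real i*(real i+1)))"
    using Pr0 by (intro sum_ennreal) auto
  also have "(\<Sum>i\<in>{m..<N}. Pr/(real i*(real i+1))) \<le> (1 - 1/(3*t 0)) * Pr / real m"
  proof (cases "m \<le> N")
    case True
    have "(\<Sum>i\<in>{m..<N}. Pr/(real i*(real i+1))) = Pr * (1/real m - 1/real N)"
      by (subst tele[OF m1 True, symmetric]) (simp add: sum_distrib_left)
    also have "\<dots> \<le> (1 - 1/(3*t 0)) * Pr / real m"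
    proof -
      have s0: "s \<ge> 0" unfolding s_def using t1[of 0] by simp
      have Nle: "real N \<le> s + 1" using s0 of_int_ceiling_le_add_one[of s] unfolding N_def by simp
      have mge: "real m \<ge> real (pd j) - 1" unfolding m_def using od_ge(1)[of j] pd_ge(2)[of j] by simp
      have h: "t 0 * (2 * real (pd j) - 3) \<ge> 1"
        using t1[of 0] p2 by (smt (verit) mult_left_mono mult_cancel_left1)
      have "3 * t 0 * real m \<ge> 3 * t 0 * (real (pd j) - 1)" using mge t1[of 0] by simp
      moreover have "3 * t 0 * (real (pd j) - 1) \<ge> s + 1" using h unfolding s_def by (simp add: algebra_simps)
      ultimately have NN: "real N \<le> 3 * t 0 * real m" using Nle by linarith
      have Npos: "real N > 0" using True m1 by simp
      have "1/(3 * t 0 * real m) \<le> 1/real N" using NN Npos by (simp add: frac_le)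
      moreover have "(1 - 1/(3*t 0))/real m = 1/real m - 1/(3*t 0*real m)"
        using t1[of 0] m1 by (simp add: field_simps)
      ultimately have "1/real m - 1/real N \<le> (1 - 1/(3*t 0)) / real m" by linarith
      then show ?thesis using Pr0 by (metis mult_left_mono times_divide_eq_right mult.commute mult.left_commute)
    qed
    finally show ?thesis .
  next
    case False
    then have "{m..<N} = {}" by auto
    then show ?thesis using Pr0 fac[of 0] m1 by simp
  qed
  finally have "emeasure lborel ({0<..<1/real (od j)} \<inter> {y. Cnd (Suc L) t (pd j) y}) \<le> ennreal ((1 - 1/(3*t 0)) * Pr / real m)"
    unfolding eq by (simp add: ennreal_leI)
  moreover have "(\<Prod>i<Suc L. (1 - 1/(3*t i))) = (1 - 1/(3*t 0)) * Pr"
    unfolding Pr_def t'_def by (rule prod.lessThan_Suc_shift)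
  ultimately show ?case unfolding m_def by simp
qed

lemma Cnd_iff:
  "Cnd L t (sgn_d1 z) (sgnT z) \<longleftrightarrow>
    (\<forall>i<L. real (sgn_d1 ((sgnT^^(Suc i)) z)) < t i * real (sgn_d1 ((sgnT^^i) z)))"
proof (induction L arbitrary: t z)
  case 0 then show ?case by simp
next
  case (Suc L)
  have "Cnd (Suc L) t (sgn_d1 z) (sgnT z) \<longleftrightarrow>
     real (sgn_d1 (sgnT z)) < t 0 * real (sgn_d1 z) \<and>
     (\<forall>i<L. real (sgn_d1 ((sgnT^^(Suc i)) (sgnT z))) < t (Suc i) * real (sgn_d1 ((sgnT^^i) (sgnT z))))"
    using Suc.IH[of "\<lambda>i. t (Suc i)" "sgnT z"] by simp
  also have "\<dots> \<longleftrightarrow> (\<forall>i<Suc L. real (sgn_d1 ((sgnT^^(Suc i)) z)) < t i * real (sgn_d1 ((sgnT^^i) z)))"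
    unfolding All_less_Suc2 by (simp add: funpow_Suc_right del: funpow.simps)
  finally show ?case .
qed

lemma lower_event:
  assumes t: "\<And>i. t i \<ge> 1"
  shows "emeasure lborel ({0<..<1} \<inter> {x. \<forall>i<L. real (sgn_d1 ((sgnT^^(Suc (N+i))) x)) < t i * real (sgn_d1 ((sgnT^^(N+i)) x))})
     \<le> ennreal (\<Prod>i<L. (1 - 1/(3*t i)))"
proof -
  define Pr where "Pr = (\<Prod>i<L. (1 - 1/(3*t i)))"
  have fac: "0 \<le> 1 - 1/(3*t i)" for i using t[of i] by (auto simp: field_simps)
  have Pr0: "Pr \<ge> 0" unfolding Pr_def using fac by (intro prod_nonneg) auto
  have H: "emeasure lborel ({0<..<1/real m} \<inter> {z. Cnd L t (sgn_d1 z) (sgnT z)}) \<le> ennreal (Pr/real m)"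
    if m: "m \<ge> 1" for m
  proof -
    have "emeasure lborel ({0<..<1/real m} \<inter> {z. Cnd L t (sgn_d1 z) (sgnT z)})
      \<le> (\<Sum>j. if m \<le> j then ennreal (1/real (pd j)) * emeasure lborel ({0<..<1/real (od j)} \<inter> {y. Cnd L t (pd j) y}) else 0)"
      by (rule master[OF m]) measurable
    also have "\<dots> \<le> (\<Sum>j. if m \<le> j then ennreal (Pr/(real j*(real j+1))) else 0)"
    proof (intro suminf_le summableI)
      fix j show "(if m \<le> j then ennreal (1/real (pd j)) * emeasure lborel ({0<..<1/real (od j)} \<inter> {y. Cnd L t (pd j) y}) else 0)
         \<le> (if m \<le> j then ennreal (Pr/(real j*(real j+1))) else 0)"
      proof (cases "m \<le> j")
        case True
        then have j1: "j \<ge> 1" using m by simp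
        have "ennreal (1/real (pd j)) * emeasure lborel ({0<..<1/real (od j)} \<inter> {y. Cnd L t (pd j) y})
            \<le> ennreal (1/real (pd j)) * ennreal (Pr/real (od j))"
          unfolding Pr_def by (intro mult_left_mono claim t j1) simp
        also have "\<dots> = ennreal (Pr/(real j*(real j+1)))"
          using pd_od[of j] Pr0 by (simp add: ennreal_mult[symmetric])
        finally show ?thesis using True by simp
      qed simp
    qed
    also have "\<dots> \<le> ennreal (Pr/real m)" by (rule sum_bound[OF m Pr0])
    finally show ?thesis .
  qed
  have "emeasure lborel ({0<..<1/real (1::nat)} \<inter> {x. (\<lambda>z. Cnd L t (sgn_d1 z) (sgnT z)) ((sgnT^^N) x)}) \<le> ennreal (Pr/real (1::nat))"
  proof (rule shift_iter[where Q="\<lambda>z. Cnd L t (sgn_d1 z) (sgnT z)" and c=Pr])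
    show "{z. Cnd L t (sgn_d1 z) (sgnT z)} \<in> sets borel" by measurable
  qed (use Pr0 H in auto)
  moreover have "{x. (\<lambda>z. Cnd L t (sgn_d1 z) (sgnT z)) ((sgnT^^N) x)}
     = {x. \<forall>i<L. real (sgn_d1 ((sgnT^^(Suc (N+i))) x)) < t i * real (sgn_d1 ((sgnT^^(N+i)) x))}"
  proof -
    have fa: "(sgnT^^(N+i)) x = (sgnT^^i) ((sgnT^^N) x)" for i x by (metis add.commute comp_apply funpow_add)
    have fb: "(sgnT^^(Suc (N+i))) x = (sgnT^^(Suc i)) ((sgnT^^N) x)" for i x by (metis add_Suc_right fa)
    show ?thesis unfolding Cnd_iff by (simp only: fa fb)
  qed
  ultimately show ?thesis unfolding Pr_def by simp
qed

lemma good_step: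
  assumes x: "0 < x" "x < 1" "x \<notin> \<rat>"
  shows "0 < sgnT x \<and> sgnT x < 1 \<and> sgnT x \<notin> \<rat> \<and> sgn_d1 x \<ge> 2"
proof -
  have nj: "\<forall>j::nat. x \<noteq> 1/real j"
  proof
    fix j :: nat show "x \<noteq> 1/real j" using x(3) by (metis Rats_divide Rats_of_nat Rats_1)
  qed
  obtain j where j: "j \<ge> 1" "1/real(j+1) < x" "x < 1/real j"
    using floor_branch[of x 1] x nj by auto
  have br: "sgn_d1 x = pd j" "sgnT x = aff j x" using branch[OF j] unfolding aff_def by auto
  have r: "0 < aff j x" "aff j x < 1/real (od j)" using aff_range[OF j(1), of x] j by auto
  have o1: "real (od j) \<ge> 1" using od_ge(1)[of j] j(1) by simp
  have "1/real (od j) \<le> 1" using o1 by simp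
  then have lt1: "aff j x < 1" using r by linarith
  have p2: "pd j \<ge> 2" using pd_pos[OF j(1)] .
  have irr: "aff j x \<notin> \<rat>"
  proof
    assume a: "aff j x \<in> \<rat>"
    have pp: "real (pd j) \<noteq> 0" using p2 by simp
    have "x = (if odd j then (aff j x + 1) / real (pd j) else (1 - aff j x) / real (pd j))"
      unfolding aff_def using pp by (auto simp: field_simps)
    moreover have "(aff j x + 1) / real (pd j) \<in> \<rat>" "(1 - aff j x) / real (pd j) \<in> \<rat>"
      using a by (auto intro!: Rats_divide Rats_add Rats_diff)
    ultimately have "x \<in> \<rat>" by presburger
    then show False using x(3) by simp
  qed
  show ?thesis using br r lt1 irr p2 by simp
qed

lemma good_iter:
  assumes x: "0 < x" "x < 1" "x \<notin> \<rat>"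
  shows "0 < (sgnT^^k) x \<and> (sgnT^^k) x < 1 \<and> (sgnT^^k) x \<notin> \<rat> \<and> sgn_d1 ((sgnT^^k) x) \<ge> 2"
proof (induction k)
  case 0 then show ?case using good_step[OF x] x by simp
next
  case (Suc k) then show ?case using good_step[of "(sgnT^^k) x"] good_step[of "(sgnT^^Suc k) x"] by simp
qed

lemma R_eq: "n \<ge> 2 \<Longrightarrow> sgn_R n x = real (sgn_d1 ((sgnT^^(Suc (n-2))) x)) / real (sgn_d1 ((sgnT^^(n-2)) x))"
  unfolding sgn_R_def sgn_d_def by (simp add: Suc_diff_Suc numeral_2_eq_2)


lemma cond_sum:
  fixes p :: real
  assumes p: "p > 0"
  shows "summable (\<lambda>n. 1/(real n * ln (real n) powr p)) \<longleftrightarrow> summable (\<lambda>n. 1/(real n powr p))"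
proof -
  define f where "f n = (if n < 3 then 1/(3 * ln 3 powr p) else 1/(real n * ln (real n) powr p))" for n::nat
  have ev: "eventually (\<lambda>n. f n = 1/(real n * ln (real n) powr p)) sequentially"
    unfolding f_def eventually_sequentially by (intro exI[of _ 3]) auto
  have g: "real m * ln (real m) powr p \<le> real (Suc m) * ln (real (Suc m)) powr p" if "m \<ge> 3" for m
  proof -
    have l: "0 \<le> ln (real m)" "ln (real m) \<le> ln (real (Suc m))" using that by auto
    have "ln (real m) powr p \<le> ln (real (Suc m)) powr p" using l p by (intro powr_mono2) auto
    then show ?thesis by (intro mult_mono) auto
  qed
  have pos: "real m * ln (real m) powr p > 0" if "m \<ge> 3" for m
  proof -
    have "ln (real m) > 0" using that by simp
    then show ?thesis using that by simp
  qed
  have mono: "f (Suc m) \<le> f m" if "0 < m" for m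
  proof (cases "m < 3")
    case True
    then show ?thesis unfolding f_def by (cases "m = 2") (auto simp: numeral_3_eq_3)
  next
    case False
    then have m3: "m \<ge> 3" by simp
    have "1/(real (Suc m) * ln (real (Suc m)) powr p) \<le> 1/(real m * ln (real m) powr p)"
      using g[OF m3] pos[OF m3] by (intro divide_left_mono) auto
    then show ?thesis unfolding f_def using m3 by simp
  qed
  have nonneg: "f n \<ge> 0" for n unfolding f_def by auto
  have "summable f \<longleftrightarrow> summable (\<lambda>n. 2^n * f (2^n))"
    by (rule condensation_test) (use mono nonneg in auto)
  also have "\<dots> \<longleftrightarrow> summable (\<lambda>n. (1 / ln 2 powr p) * (1/(real n powr p)))"
  proof (rule summable_cong)
    show "eventually (\<lambda>n. 2^n * f (2^n) = (1 / ln 2 powr p) * (1/(real n powr p))) sequentially"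
      unfolding eventually_sequentially
    proof (intro exI[of _ 2] allI impI)
      fix n :: nat assume n: "n \<ge> 2"
      have "(2::nat)^n \<ge> 2^2" using n by (intro power_increasing) auto
      then have n3: "\<not> (2::nat)^n < 3" by simp
      have "ln (real (2^n)) = real n * ln 2" by (simp add: ln_realpow)
      then have "ln (real (2^n)) powr p = real n powr p * ln 2 powr p"
        by (simp add: powr_mult)
      then show "2^n * f (2^n) = (1 / ln 2 powr p) * (1/(real n powr p))"
        unfolding f_def using n3 by (simp add: field_simps)
    qed
  qed
  also have "\<dots> \<longleftrightarrow> summable (\<lambda>n. 1/(real n powr p))"
    using summable_cmult_iff[of "1 / ln 2 powr p" "\<lambda>n. 1/(real n powr p)"] by simp
  finally show ?thesis using summable_cong[OF ev] by simp
qed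

lemma not_summable_nln: "\<not> summable (\<lambda>n. 1/(real n * ln (real n)))"
proof -
  have "(\<lambda>n. 1/(real n * ln (real n) powr 1)) = (\<lambda>n. 1/(real n * ln (real n)))"
  proof
    fix n :: nat
    show "1/(real n * ln (real n) powr 1) = 1/(real n * ln (real n))"
      by (cases "n = 0") (auto simp: powr_one)
  qed
  moreover have "(\<lambda>n. 1/(real n powr 1)) = (\<lambda>n. inverse (real n))"
    by (auto simp: powr_one divide_inverse)
  ultimately show ?thesis using cond_sum[of 1] not_summable_harmonic[where 'a=real] by simp
qed

lemma summable_nlnp:
  fixes p :: real assumes "p > 1"
  shows "summable (\<lambda>n. 1/(real n * ln (real n) powr p))"
proof -
  have "(\<lambda>n. 1/(real n powr p)) = (\<lambda>n. real n powr (-p))"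
    by (auto simp: powr_minus_divide)
  moreover have "summable (\<lambda>n. real n powr (-p))" using assms summable_real_powr_iff by simp
  ultimately show ?thesis using cond_sum[of p] assms by simp
qed

lemma prod_to_zero:
  fixes a :: "nat \<Rightarrow> real"
  assumes a0: "\<And>i. 0 \<le> a i" and a1: "\<And>i. a i \<le> 1" and ns: "\<not> summable a" and e: "e > 0"
  shows "\<exists>L. (\<Prod>i<L. (1 - a i)) < e"
proof -
  obtain L where L: "sum a {..<L} > - ln e"
  proof -
    have "\<not> (\<forall>n. sum a {..n} \<le> - ln e)" using bounded_imp_summable[of a "- ln e"] a0 ns by blast
    then obtain n where "sum a {..n} > - ln e" by (auto simp: not_le)
    then show ?thesis using that[of "Suc n"] by (simp add: lessThan_Suc_atMost)
  qed
  have "(\<Prod>i<L. (1 - a i)) \<le> (\<Prod>i<L. exp (- a i))"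
  proof (intro prod_mono conjI)
    fix i show "0 \<le> 1 - a i" using a1[of i] by simp
    show "1 - a i \<le> exp (- a i)" using exp_ge_add_one_self[of "- a i"] by simp
  qed
  also have "\<dots> = exp (- sum a {..<L})" by (simp add: exp_sum[symmetric] sum_negf)
  also have "\<dots> < exp (ln e)" using L by simp
  also have "\<dots> = e" using e by simp
  finally show ?thesis by blast
qed

lemma ln_facts:
  assumes "n \<ge> (3::nat)"
  shows "ln (real n) > 1" "ln (ln (real n)) > 0"
proof -
  have "exp 1 < (3::real)" using e_less_272 by simp
  also have "3 \<le> real n" using assms by simp
  finally have "exp 1 < real n" .
  moreover have "0 < n" using assms by simp
  ultimately show g: "ln (real n) > 1" using ln_less_cancel_iff[of "exp 1" "real n"] by simp
  then show "ln (ln (real n)) > 0" by simp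
qed

lemma limsup_ge1:
  assumes "\<forall>N. \<exists>n\<ge>N. g n \<ge> (1::real)"
  shows "limsup (\<lambda>n. ereal (g n)) \<ge> 1"
proof (rule ccontr)
  assume "\<not> limsup (\<lambda>n. ereal (g n)) \<ge> 1"
  then have "limsup (\<lambda>n. ereal (g n)) < 1" by simp
  then have "eventually (\<lambda>n. ereal (g n) < 1) sequentially" by (rule Limsup_lessD)
  then obtain N where N: "\<forall>n\<ge>N. ereal (g n) < 1" unfolding eventually_sequentially by blast
  obtain n where n: "n \<ge> N" "g n \<ge> 1" using assms by blast
  have "ereal (g n) < 1" using N n(1) by blast
  then have "g n < 1" by simp
  then show False using n(2) by simp
qed

lemma limsup_le1:
  assumes "\<And>q::nat. eventually (\<lambda>n. g n \<le> 1 + 1/(real q + 1)) sequentially"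
  shows "limsup (\<lambda>n. ereal (g n)) \<le> 1"
proof (rule ereal_le_epsilon2)
  fix e :: real assume e: "0 < e"
  obtain q :: nat where q: "1/(real q + 1) < e"
  proof -
    obtain q :: nat where "inverse (real (Suc q)) < e" using reals_Archimedean[OF e] by blast
    then show ?thesis using that[of q] by (simp add: divide_inverse add.commute)
  qed
  have "limsup (\<lambda>n. ereal (g n)) \<le> ereal (1 + 1/(real q + 1))"
    by (rule Limsup_bounded) (use assms[of q] in \<open>auto elim: eventually_mono\<close>)
  also have "\<dots> \<le> 1 + ereal e" using q by simp
  finally show "limsup (\<lambda>n. ereal (g n)) \<le> 1 + ereal e" .
qed



lemma lower_AE:
  "AE x in lborel. 0 < x \<and> x < 1 \<and> x \<notin> \<rat> \<longrightarrow> (\<forall>N. \<exists>n\<ge>N. sgn_R n x \<ge> real n * ln (real n))"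
proof -
  define t where "t N i = real (N+3+i) * ln (real (N+3+i))" for N i :: nat
  define E where "E N L = {0<..<(1::real)} \<inter> {x. \<forall>i<L. real (sgn_d1 ((sgnT^^(Suc (Suc N + i))) x)) < t N i * real (sgn_d1 ((sgnT^^(Suc N + i)) x))}" for N L
  have Em[measurable]: "E N L \<in> sets borel" for N L unfolding E_def by measurable
  have t1: "t N i \<ge> 1" for N i
  proof -
    have "ln (real (N+3+i)) > 1" by (rule ln_facts) simp
    moreover have "real (N+3+i) \<ge> 1" by simp
    ultimately show ?thesis unfolding t_def by (metis less_imp_le mult_mono' mult_1 zero_le_one)
  qed
  have Ebound: "emeasure lborel (E N L) \<le> ennreal (\<Prod>i<L. (1 - 1/(3 * t N i)))" for N L
    unfolding E_def using lower_event[of "t N" L "Suc N"] t1 by simp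
  have ns: "\<not> summable (\<lambda>i. 1/(3 * t N i))" for N
  proof
    assume "summable (\<lambda>i. 1/(3 * t N i))"
    then have "summable (\<lambda>i. 3 * (1/(3 * t N i)))" by (rule summable_mult)
    moreover have "(\<lambda>i. 3 * (1/(3 * t N i))) = (\<lambda>i. 1/(real (i + (N+3)) * ln (real (i + (N+3)))))"
      unfolding t_def by (auto simp: add_ac)
    ultimately have "summable (\<lambda>i. (\<lambda>n. 1/(real n * ln (real n))) (i + (N+3)))" by simp
    then have "summable (\<lambda>n. 1/(real n * ln (real n)))" by (rule summable_iff_shift[THEN iffD1])
    with not_summable_nln show False by simp
  qed
  have Z0: "(\<Inter>L. E N L) \<in> null_sets lborel" for N
  proof -
    have h: "emeasure lborel (\<Inter>L. E N L) \<le> 0 + ennreal e" if e: "e > 0" for e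
    proof -
      have a0: "0 \<le> 1/(3 * t N i)" "1/(3 * t N i) \<le> 1" for i using t1[of N i] by (auto simp: field_simps)
      obtain L where L: "(\<Prod>i<L. (1 - 1/(3 * t N i))) < e" using prod_to_zero[OF a0 ns e] by blast
      have "emeasure lborel (\<Inter>L. E N L) \<le> emeasure lborel (E N L)" by (intro emeasure_mono) auto
      also have "\<dots> \<le> ennreal (\<Prod>i<L. (1 - 1/(3 * t N i)))" by (rule Ebound)
      also have "\<dots> \<le> ennreal e" using L by (intro ennreal_leI) simp
      finally show ?thesis by simp
    qed
    have "emeasure lborel (\<Inter>L. E N L) \<le> 0" by (rule ennreal_le_epsilon) (rule h)
    then have "emeasure lborel (\<Inter>L. E N L) = 0" by simp
    moreover have "(\<Inter>L. E N L) \<in> sets lborel" by simp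
    ultimately show ?thesis by (rule null_setsI)
  qed
  have Z: "(\<Union>N. \<Inter>L. E N L) \<in> null_sets lborel" using Z0 by blast
  show ?thesis
  proof (rule AE_I'[OF Z], rule subsetI)
    fix x assume "x \<in> {x \<in> space lborel. \<not> (0 < x \<and> x < 1 \<and> x \<notin> \<rat> \<longrightarrow> (\<forall>N. \<exists>n\<ge>N. sgn_R n x \<ge> real n * ln (real n)))}"
    then have x: "0 < x" "x < 1" "x \<notin> \<rat>" and "\<exists>N. \<forall>n\<ge>N. \<not> sgn_R n x \<ge> real n * ln (real n)" by auto
    then obtain N where N: "\<forall>n\<ge>N. sgn_R n x < real n * ln (real n)" by (auto simp: not_le)
    have "x \<in> E N L" for L
      unfolding E_def
    proof (intro IntI CollectI allI impI)
      show "x \<in> {0<..<1}" using x by simp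
      fix i assume "i < L"
      define n where "n = N + 3 + i"
      have n2: "n \<ge> 2" "n \<ge> N" unfolding n_def by auto
      have e1: "n - 2 = Suc N + i" unfolding n_def by simp
      have pos: "real (sgn_d1 ((sgnT^^(Suc N + i)) x)) > 0" using good_iter[OF x, of "Suc N + i"] by simp
      have "real (sgn_d1 ((sgnT^^(Suc (Suc N + i))) x)) / real (sgn_d1 ((sgnT^^(Suc N + i)) x)) < t N i"
      proof -
        have h1: "sgn_R n x < real n * ln (real n)" using N n2(2) by blast
        have h2: "sgn_R n x = real (sgn_d1 ((sgnT^^(Suc (Suc N + i))) x)) / real (sgn_d1 ((sgnT^^(Suc N + i)) x))"
          using R_eq[OF n2(1), of x] unfolding e1 .
        have h3: "t N i = real n * ln (real n)" unfolding t_def n_def by simp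
        show ?thesis using h1 h2 h3 by simp
      qed
      then show "real (sgn_d1 ((sgnT^^(Suc (Suc N + i))) x)) < t N i * real (sgn_d1 ((sgnT^^(Suc N + i)) x))"
        using pos by (simp add: divide_less_eq)
    qed
    then show "x \<in> (\<Union>N. \<Inter>L. E N L)" by blast
  qed
qed

lemma upper_AE:
  fixes p :: real assumes p: "p > 1"
  shows "AE x in lborel. 0 < x \<and> x < 1 \<and> x \<notin> \<rat> \<longrightarrow> eventually (\<lambda>n. sgn_R n x < real n * ln (real n) powr p) sequentially"
proof -
  define u where "u n = real n * ln (real n) powr p" for n :: nat
  define A where "A n = (if 3 \<le> n then {0<..<(1::real)} \<inter> {x. u n * real (sgn_d1 ((sgnT^^(n-2)) x)) \<le> real (sgn_d1 ((sgnT^^(Suc (n-2))) x))} else {})" for n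
  have Am[measurable]: "A n \<in> sets lborel" for n unfolding A_def by simp
  have u0: "u n \<ge> 0" for n unfolding u_def by simp
  have u1: "u n \<ge> 1" if "n \<ge> 3" for n
  proof -
    have "ln (real n) > 1" using ln_facts[OF that] by simp
    then have "ln (real n) powr p \<ge> 1" using p by (intro ge_one_powr_ge_zero) auto
    moreover have "real n \<ge> 1" using that by simp
    ultimately show ?thesis unfolding u_def using mult_mono[of 1 "real n" 1 "ln (real n) powr p"] by simp
  qed
  have Ab: "emeasure lborel (A n) \<le> ennreal (3 / u n)" for n
  proof (cases "3 \<le> n")
    case True
    then show ?thesis unfolding A_def using upper_R[OF u1[OF True], of "n-2"] by simp
  qed (simp add: A_def)
  have fin: "emeasure lborel (A n) < top" for n using Ab[of n] ennreal_less_top[of "3/u n"] by (rule le_less_trans)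
  have mb: "measure lborel (A n) \<le> 3 / u n" for n
  proof -
    have "ennreal (measure lborel (A n)) \<le> ennreal (3 / u n)"
      using Ab[of n] emeasure_eq_ennreal_measure[of lborel "A n"] fin[of n] by simp
    then show ?thesis using u0[of n] by (simp add: ennreal_le_iff)
  qed
  have sm: "summable (\<lambda>n. measure lborel (A n))"
  proof (rule summable_comparison_test'[where N=0])
    show "summable (\<lambda>n. 3 * (1/(real n * ln (real n) powr p)))"
      using summable_nlnp[OF p] by (rule summable_mult)
    fix n :: nat
    show "norm (measure lborel (A n)) \<le> 3 * (1/(real n * ln (real n) powr p))"
      using mb[of n] unfolding u_def by simp
  qed
  have BC: "AE x in lborel. eventually (\<lambda>n. x \<in> space lborel - A n) sequentially"
    by (rule borel_cantelli_AE1) (use Am fin sm in auto)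
  show ?thesis
  proof (rule AE_mp[OF BC], rule AE_I2, intro impI)
    fix x assume ev: "eventually (\<lambda>n. x \<in> space lborel - A n) sequentially"
      and x: "0 < x \<and> x < 1 \<and> x \<notin> \<rat>"
    have ev3: "eventually (\<lambda>n. n \<ge> 3) sequentially" by (rule eventually_ge_at_top)
    show "eventually (\<lambda>n. sgn_R n x < real n * ln (real n) powr p) sequentially"
      using ev ev3
    proof eventually_elim
      case (elim n)
      then have n3: "n \<ge> 3" and nA: "x \<notin> A n" by auto
      have "\<not> u n * real (sgn_d1 ((sgnT^^(n-2)) x)) \<le> real (sgn_d1 ((sgnT^^(Suc (n-2))) x))"
        using nA n3 x unfolding A_def by auto
      then have lt: "real (sgn_d1 ((sgnT^^(Suc (n-2))) x)) < u n * real (sgn_d1 ((sgnT^^(n-2)) x))" by simp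
      have pos: "real (sgn_d1 ((sgnT^^(n-2)) x)) > 0" using good_iter[of x "n-2"] x by simp
      have n2: "n \<ge> 2" using n3 by simp
      have "sgn_R n x = real (sgn_d1 ((sgnT^^(Suc (n-2))) x)) / real (sgn_d1 ((sgnT^^(n-2)) x))"
        by (rule R_eq[OF n2])
      also have "\<dots> < u n" using lt pos by (simp add: divide_less_eq)
      finally show ?case unfolding u_def .
    qed
  qed
qed

lemma Rpos:
  assumes x: "0 < x" "x < 1" "x \<notin> \<rat>" and n: "n \<ge> 1"
  shows "sgn_R n x > 0"
proof (cases "n = 1")
  case True
  then show ?thesis using good_iter[OF x, of 0] unfolding sgn_R_def sgn_d_def by simp
next
  case False
  then have n2: "n \<ge> 2" using n by simp
  have a: "real (sgn_d1 ((sgnT^^(Suc (n-2))) x)) > 0" using good_iter[OF x, of "Suc (n-2)"] by simp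
  have b: "real (sgn_d1 ((sgnT^^(n-2)) x)) > 0" using good_iter[OF x, of "n-2"] by simp
  show ?thesis unfolding R_eq[OF n2] using a b by simp
qed

lemma M_ge:
  assumes "k \<in> {1..n}"
  shows "sgn_R k x \<le> sgn_M n x"
  unfolding sgn_M_def using assms by (intro Max_ge) auto

lemma M_le:
  assumes "n \<ge> 1" "\<And>k. k \<in> {1..n} \<Longrightarrow> sgn_R k x \<le> B"
  shows "sgn_M n x \<le> B"
  unfolding sgn_M_def using assms by (intro Max.boundedI) auto

lemma logA:
  assumes n: "n \<ge> 3" and y: "y \<ge> real n * ln (real n)"
  shows "(ln y - ln (real n)) / ln (ln (real n)) \<ge> 1"
proof -
  have l1: "ln (real n) > 1" "ln (ln (real n)) > 0" using ln_facts[OF n] by auto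
  have np: "real n > 0" using n by simp
  have pp: "real n * ln (real n) > 0" using l1(1) np by (intro mult_pos_pos) linarith+
  have "ln (real n * ln (real n)) \<le> ln y" using y pp by simp
  moreover have "ln (real n * ln (real n)) = ln (real n) + ln (ln (real n))" using np l1 by (simp add: ln_mult)
  ultimately have "ln (ln (real n)) \<le> ln y - ln (real n)" by simp
  then show ?thesis using l1 by (simp add: le_divide_eq)
qed

lemma logB:
  assumes n: "n \<ge> 3" and y: "0 < y" "y \<le> real n * ln (real n) powr p"
  shows "(ln y - ln (real n)) / ln (ln (real n)) \<le> p"
proof -
  have l1: "ln (real n) > 1" "ln (ln (real n)) > 0" using ln_facts[OF n] by auto
  have np: "real n > 0" using n by simp
  have pp: "ln (real n) powr p > 0" using l1 by simp
  have "ln y \<le> ln (real n * ln (real n) powr p)" using y np pp by simp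
  moreover have "ln (real n * ln (real n) powr p) = ln (real n) + p * ln (ln (real n))" using np pp by (simp add: ln_mult)
  ultimately have "ln y - ln (real n) \<le> p * ln (ln (real n))" by simp
  then show ?thesis using l1 by (simp add: divide_le_eq)
qed

lemma pointwise:
  assumes x: "0 < x" "x < 1" "x \<notin> \<rat>"
    and low: "\<forall>N. \<exists>n\<ge>N. sgn_R n x \<ge> real n * ln (real n)"
    and up: "\<forall>q::nat. eventually (\<lambda>n. sgn_R n x < real n * ln (real n) powr (1 + 1/(real q + 1))) sequentially"
  shows "limsup (\<lambda>n. ereal ((ln (sgn_R n x) - ln (real n)) / ln (ln (real n)))) = 1 \<and>
     limsup (\<lambda>n. ereal ((ln (sgn_M n x) - ln (real n)) / ln (ln (real n)))) = 1"
proof -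
  have lowR: "\<forall>N. \<exists>n\<ge>N. (ln (sgn_R n x) - ln (real n)) / ln (ln (real n)) \<ge> 1"
  proof
    fix N obtain n where n: "n \<ge> max N 3" "sgn_R n x \<ge> real n * ln (real n)" using low by blast
    then show "\<exists>n\<ge>N. (ln (sgn_R n x) - ln (real n)) / ln (ln (real n)) \<ge> 1"
      using logA[of n "sgn_R n x"] by auto
  qed
  have lowM: "\<forall>N. \<exists>n\<ge>N. (ln (sgn_M n x) - ln (real n)) / ln (ln (real n)) \<ge> 1"
  proof
    fix N obtain n where n: "n \<ge> max N 3" "sgn_R n x \<ge> real n * ln (real n)" using low by blast
    have "sgn_R n x \<le> sgn_M n x" using n(1) by (intro M_ge) auto
    then show "\<exists>n\<ge>N. (ln (sgn_M n x) - ln (real n)) / ln (ln (real n)) \<ge> 1"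
      using logA[of n "sgn_M n x"] n by auto
  qed
  have upR: "eventually (\<lambda>n. (ln (sgn_R n x) - ln (real n)) / ln (ln (real n)) \<le> 1 + 1/(real q + 1)) sequentially" for q :: nat
    using up[rule_format, of q] eventually_ge_at_top[of "3::nat"]
  proof eventually_elim
    case (elim n)
    have "sgn_R n x > 0" using Rpos[OF x, of n] elim by simp
    then show ?case using logB[of n "sgn_R n x" "1 + 1/(real q + 1)"] elim by simp
  qed
  have upM: "eventually (\<lambda>n. (ln (sgn_M n x) - ln (real n)) / ln (ln (real n)) \<le> 1 + 1/(real q + 1)) sequentially" for q :: nat
  proof -
    define p where "p = 1 + 1/(real q + 1)"
    have p1: "p > 0" unfolding p_def by (simp add: add_pos_nonneg)
    define u where "u n = real n * ln (real n) powr p" for n :: nat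
    obtain n0 where n0: "\<forall>n\<ge>n0. sgn_R n x < u n"
      using up[rule_format, of q] unfolding eventually_sequentially u_def p_def by blast
    define n1 where "n1 = max n0 3"
    define C where "C = sgn_M n1 x"
    have umono: "u k \<le> u n" if "3 \<le> k" "k \<le> n" for k n
    proof -
      have "0 \<le> ln (real k)" "ln (real k) \<le> ln (real n)" using that by auto
      then have "ln (real k) powr p \<le> ln (real n) powr p" using p1 by (intro powr_mono2) auto
      then show ?thesis unfolding u_def using that by (intro mult_mono) auto
    qed
    have uge: "u n \<ge> real n" if "n \<ge> 3" for n
    proof -
      have "ln (real n) \<ge> 1" using ln_facts[OF that] by simp
      then have "ln (real n) powr p \<ge> 1" using p1 by (intro ge_one_powr_ge_zero) auto
      then show ?thesis unfolding u_def using mult_left_mono[of 1 "ln (real n) powr p" "real n"] by simp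
    qed
    have "eventually (\<lambda>n. n \<ge> max n1 (nat (ceiling C))) sequentially" by (rule eventually_ge_at_top)
    then show ?thesis
    proof eventually_elim
      case (elim n)
      have n3: "n \<ge> 3" "n \<ge> n1" "n \<ge> n0" using elim unfolding n1_def by auto
      have Cle: "C \<le> u n"
      proof -
        have "C \<le> real (nat (ceiling C))" by linarith
        also have "\<dots> \<le> real n" using elim by simp
        also have "\<dots> \<le> u n" by (rule uge[OF n3(1)])
        finally show ?thesis .
      qed
      have "sgn_M n x \<le> u n"
      proof (rule M_le)
        show "n \<ge> 1" using n3 by simp
        fix k assume k: "k \<in> {1..n}"
        show "sgn_R k x \<le> u n"
        proof (cases "k \<le> n1")
          case True
          then have "sgn_R k x \<le> C" unfolding C_def using k by (intro M_ge) auto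
          then show ?thesis using Cle by simp
        next
          case False
          then have "k \<ge> n0" "k \<ge> 3" unfolding n1_def by auto
          then have "sgn_R k x < u k" using n0 by blast
          also have "u k \<le> u n" using \<open>k \<ge> 3\<close> k by (intro umono) auto
          finally show ?thesis by simp
        qed
      qed
      moreover have "sgn_M n x > 0"
      proof -
        have "sgn_R 1 x \<le> sgn_M n x" using n3 by (intro M_ge) auto
        moreover have "sgn_R 1 x > 0" using Rpos[OF x, of 1] by simp
        ultimately show ?thesis by simp
      qed
      ultimately show ?case using logB[of n "sgn_M n x" p] n3 unfolding u_def p_def by simp
    qed
  qed
  have "limsup (\<lambda>n. ereal ((ln (sgn_R n x) - ln (real n)) / ln (ln (real n)))) = 1"
    using limsup_ge1[OF lowR] limsup_le1[OF upR] by (rule antisym[rotated])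
  moreover have "limsup (\<lambda>n. ereal ((ln (sgn_M n x) - ln (real n)) / ln (ln (real n)))) = 1"
    using limsup_ge1[OF lowM] limsup_le1[OF upM] by (rule antisym[rotated])
  ultimately show ?thesis ..
qed

theorem theorem1p7:
  shows "AE x in lebesgue. x \<in> {0<..<1} \<longrightarrow>
    (limsup (\<lambda>n. ereal ((ln (sgn_R n x) - ln (real n)) / ln (ln (real n)))) = 1 \<and>
     limsup (\<lambda>n. ereal ((ln (sgn_M n x) - ln (real n)) / ln (ln (real n)))) = 1)"
proof -
  have r: "AE x in lborel. x \<notin> \<rat>"
    by (rule AE_not_in) (rule countable_imp_null_set_lborel[OF countable_rat])
  have l: "AE x in lborel. 0 < x \<and> x < 1 \<and> x \<notin> \<rat> \<longrightarrow> (\<forall>N. \<exists>n\<ge>N. sgn_R n x \<ge> real n * ln (real n))"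
    by (rule lower_AE)
  have u: "AE x in lborel. \<forall>q::nat. 0 < x \<and> x < 1 \<and> x \<notin> \<rat> \<longrightarrow> eventually (\<lambda>n. sgn_R n x < real n * ln (real n) powr (1 + 1/(real q + 1))) sequentially"
  proof (subst AE_all_countable, rule allI)
    fix q :: nat
    show "AE x in lborel. 0 < x \<and> x < 1 \<and> x \<notin> \<rat> \<longrightarrow> eventually (\<lambda>n. sgn_R n x < real n * ln (real n) powr (1 + 1/(real q + 1))) sequentially"
      by (rule upper_AE) (simp add: add_pos_nonneg)
  qed
  have "AE x in lborel. x \<in> {0<..<1} \<longrightarrow>
    (limsup (\<lambda>n. ereal ((ln (sgn_R n x) - ln (real n)) / ln (ln (real n)))) = 1 \<and>
     limsup (\<lambda>n. ereal ((ln (sgn_M n x) - ln (real n)) / ln (ln (real n)))) = 1)"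
    using r l u
  proof eventually_elim
    case (elim x)
    show ?case
    proof
      assume "x \<in> {0<..<1}"
      then have x: "0 < x" "x < 1" "x \<notin> \<rat>" using elim(1) by auto
      have lo: "\<forall>N. \<exists>n\<ge>N. sgn_R n x \<ge> real n * ln (real n)" using elim(2) x by blast
      have upq: "\<forall>q::nat. eventually (\<lambda>n. sgn_R n x < real n * ln (real n) powr (1 + 1/(real q + 1))) sequentially"
        using elim(3) x by blast
      show "limsup (\<lambda>n. ereal ((ln (sgn_R n x) - ln (real n)) / ln (ln (real n)))) = 1 \<and>
        limsup (\<lambda>n. ereal ((ln (sgn_M n x) - ln (real n)) / ln (ln (real n)))) = 1"
        by (rule pointwise[OF x lo upq])
    qed
  qed
  then show ?thesis by (rule AE_completion)
qed


end
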